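(* Suppose $\mathrm{char}(k)\ne2$ ($k$ algebraically closed). The set $\mathscr{X}_2$ of isogeny classes of non-degenerate quadratic spaces of countable dimension has exactly one element.
   Context: A quadratic space is a $k$-vector space $V$ together with $q\in P_2(V)$, a degree-$2$ polynomial function on $V$ (in dual coordinates to a basis, a formal, possibly infinite, $k$-linear combination of degree-$2$ monomials). The strength of $q$ is the least $s$ with $q=\sum_{i=1}^s g_ih_i$ for linear forms $g_i,h_i$ ($\infty$ if none exists); $(V,q)$ is non-degenerate if $q$ has infinite strength. An embedding $(W,q')\to(V,q)$ is a $k$-linear map $\phi:W\to V$ with $q\circ\phi=q'$; two quadratic spaces are isogenous if each embeds into the other. *)

theory Defs
  imports "HOL-Computational_Algebra.Polynomial" "HOL-Library.Extended_Nat"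
begin

definition is_basis :: "('k::field \<Rightarrow> 'v::ab_group_add \<Rightarrow> 'v) \<Rightarrow> 'v set \<Rightarrow> bool" where
  "is_basis s B \<longleftrightarrow> \<not> module.dependent s B \<and> module.span s B = UNIV"

definition countable_dim :: "('k::field \<Rightarrow> 'v::ab_group_add \<Rightarrow> 'v) \<Rightarrow> bool" where
  "countable_dim s \<longleftrightarrow> (\<exists>B. is_basis s B \<and> countable B)"

definition linear_form :: "('k::field \<Rightarrow> 'v::ab_group_add \<Rightarrow> 'v) \<Rightarrow> ('v \<Rightarrow> 'k) \<Rightarrow> bool" where
  "linear_form s g \<longleftrightarrow> Vector_Spaces.linear s ((*)) g"

text \<open>P_2(V): in dual coordinates x_b (b in a basis B), q is a formal (possibly infinite)
  linear combination of degree-2 monomials x_b x_c; evaluated at v it is a finite sum,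
  since only finitely many coordinates of v are nonzero.\<close>
definition P2 :: "('k::field \<Rightarrow> 'v::ab_group_add \<Rightarrow> 'v) \<Rightarrow> ('v \<Rightarrow> 'k) \<Rightarrow> bool" where
  "P2 s q \<longleftrightarrow> (\<exists>B c. is_basis s B \<and>
     (\<forall>v. q v = (\<Sum>(b1, b2) \<in> {b. module.representation s B v b \<noteq> 0} \<times>
                                  {b. module.representation s B v b \<noteq> 0}.
            c b1 b2 * module.representation s B v b1 * module.representation s B v b2)))"

definition quadratic_space :: "('k::field \<Rightarrow> 'v::ab_group_add \<Rightarrow> 'v) \<Rightarrow> ('v \<Rightarrow> 'k) \<Rightarrow> bool" where
  "quadratic_space s q \<longleftrightarrow> vector_space s \<and> P2 s q"

definition strength_le :: "('k::field \<Rightarrow> 'v::ab_group_add \<Rightarrow> 'v) \<Rightarrow> ('v \<Rightarrow> 'k) \<Rightarrow> nat \<Rightarrow> bool" where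
  "strength_le s q n \<longleftrightarrow> (\<exists>g h :: nat \<Rightarrow> 'v \<Rightarrow> 'k.
      (\<forall>i<n. linear_form s (g i) \<and> linear_form s (h i)) \<and>
      (\<forall>v. q v = (\<Sum>i<n. g i v * h i v)))"

definition strength :: "('k::field \<Rightarrow> 'v::ab_group_add \<Rightarrow> 'v) \<Rightarrow> ('v \<Rightarrow> 'k) \<Rightarrow> enat" where
  "strength s q = (if \<exists>n. strength_le s q n then enat (LEAST n. strength_le s q n) else \<infinity>)"

definition nondegenerate :: "('k::field \<Rightarrow> 'v::ab_group_add \<Rightarrow> 'v) \<Rightarrow> ('v \<Rightarrow> 'k) \<Rightarrow> bool" where
  "nondegenerate s q \<longleftrightarrow> strength s q = \<infinity>"

definition embeds ::
  "('k::field \<Rightarrow> 'w::ab_group_add \<Rightarrow> 'w) \<Rightarrow> ('w \<Rightarrow> 'k) \<Rightarrow>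
   ('k \<Rightarrow> 'v::ab_group_add \<Rightarrow> 'v) \<Rightarrow> ('v \<Rightarrow> 'k) \<Rightarrow> bool" where
  "embeds sW q' sV q \<longleftrightarrow> (\<exists>\<phi>. Vector_Spaces.linear sW sV \<phi> \<and> q \<circ> \<phi> = q')"

definition isogenous ::
  "('k::field \<Rightarrow> 'w::ab_group_add \<Rightarrow> 'w) \<Rightarrow> ('w \<Rightarrow> 'k) \<Rightarrow>
   ('k \<Rightarrow> 'v::ab_group_add \<Rightarrow> 'v) \<Rightarrow> ('v \<Rightarrow> 'k) \<Rightarrow> bool" where
  "isogenous sW q' sV q \<longleftrightarrow> embeds sW q' sV q \<and> embeds sV q sW q'"

end

theory Submission
  imports Defs
begin


lemma vs_mult: "vector_space ((*) :: 'k::field \<Rightarrow> 'k \<Rightarrow> 'k)"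
  by unfold_locales (auto simp: algebra_simps)

lemma linear_formI:
  assumes "vector_space s" "\<And>x y. g (x + y) = g x + g y" "\<And>t x. g (s t x) = t * g x"
  shows "linear_form s g"
  unfolding linear_form_def
  using assms vs_mult
  by (simp add: Vector_Spaces.linear_def module_hom_def module_hom_axioms_def vector_space_def module_def algebra_simps)

lemma linear_formD:
  assumes "linear_form s g"
  shows "g (x + y) = g x + g y" "g (s t x) = t * g x"
  using assms unfolding linear_form_def Vector_Spaces.linear_def module_hom_def module_hom_axioms_def
  by auto

lemma cz:
  fixes M :: "nat \<Rightarrow> 'i \<Rightarrow> 'k::field"
  assumes "finite I" "card I > n"
  shows "\<exists>a. (\<exists>k\<in>I. a k \<noteq> 0) \<and> (\<forall>j<n. (\<Sum>i\<in>I. M j i * a i) = 0)"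
  using assms
proof (induction n arbitrary: I M)
  case 0
  then obtain k where "k \<in> I" by fastforce
  then show ?case by (intro exI[of _ "\<lambda>_. 1"]) auto
next
  case (Suc n)
  show ?case
  proof (cases "\<forall>i\<in>I. M n i = 0")
    case True
    from Suc.IH[of I M] Suc.prems obtain a where a: "\<exists>k\<in>I. a k \<noteq> 0" "\<forall>j<n. (\<Sum>i\<in>I. M j i * a i) = 0"
      by auto
    show ?thesis
      by (rule exI[of _ a]) (use a True in \<open>auto simp: less_Suc_eq\<close>)
  next
    case False
    then obtain p where p: "p \<in> I" "M n p \<noteq> 0" by auto
    define I' where "I' = I - {p}"
    define M' where "M' j i = M j i - M j p * M n i / M n p" for j i
    have fI': "finite I'" and cI': "card I' > n" using Suc.prems p by (auto simp: I'_def)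
    from Suc.IH[OF fI' cI', of M'] obtain a' where a': "\<exists>k\<in>I'. a' k \<noteq> 0"
      "\<forall>j<n. (\<Sum>i\<in>I'. M' j i * a' i) = 0" by auto
    define S where "S = (\<Sum>i\<in>I'. M n i * a' i)"
    define a where "a i = (if i = p then - S / M n p else a' i)" for i
    have I: "I = insert p I'" "p \<notin> I'" using p by (auto simp: I'_def)
    have sa: "(\<Sum>i\<in>I'. N i * a i) = (\<Sum>i\<in>I'. N i * a' i)" for N
      by (rule sum.cong) (auto simp: a_def I)
    have "\<forall>j<Suc n. (\<Sum>i\<in>I. M j i * a i) = 0"
    proof (intro allI impI)
      fix j assume j: "j < Suc n"
      have eq: "(\<Sum>i\<in>I. M j i * a i) = M j p * a p + (\<Sum>i\<in>I'. M j i * a' i)"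
        using fI' by (simp add: I sum.insert sa)
      show "(\<Sum>i\<in>I. M j i * a i) = 0"
      proof (cases "j = n")
        case True
        then show ?thesis using p(2) unfolding eq by (simp add: a_def S_def)
      next
        case False
        with j have "j < n" by simp
        with a'(2) have "(\<Sum>i\<in>I'. M' j i * a' i) = 0" by auto
        moreover have "(\<Sum>i\<in>I'. M' j i * a' i) = (\<Sum>i\<in>I'. M j i * a' i) - M j p / M n p * S"
          by (simp add: M'_def S_def algebra_simps sum_subtractf sum_distrib_left sum_divide_distrib)
        ultimately show ?thesis using p(2) unfolding eq by (simp add: a_def field_simps)
      qed
    qed
    moreover have "\<exists>k\<in>I. a k \<noteq> 0" using a'(1) I by (auto simp: a_def)
    ultimately show ?thesis by blast
  qed
qed




lemma strength_le_0: "strength_le s (\<lambda>x. 0) 0"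
  unfolding strength_le_def by auto

lemma strength_le_prod:
  "linear_form s g \<Longrightarrow> linear_form s h \<Longrightarrow> strength_le s (\<lambda>x. g x * h x) 1"
  unfolding strength_le_def by (intro exI[of _ "\<lambda>_. g"] exI[of _ "\<lambda>_. h"]) auto

lemma strength_le_add:
  assumes "strength_le s q1 n1" "strength_le s q2 n2"
  shows "strength_le s (\<lambda>x. q1 x + q2 x) (n1 + n2)"
proof -
  obtain g1 h1 where 1: "\<forall>i<n1. linear_form s (g1 i) \<and> linear_form s (h1 i)"
     "\<forall>v. q1 v = (\<Sum>i<n1. g1 i v * h1 i v)" using assms(1) unfolding strength_le_def by blast
  obtain g2 h2 where 2: "\<forall>i<n2. linear_form s (g2 i) \<and> linear_form s (h2 i)"
     "\<forall>v. q2 v = (\<Sum>i<n2. g2 i v * h2 i v)" using assms(2) unfolding strength_le_def by blast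
  define g where "g i = (if i < n1 then g1 i else g2 (i - n1))" for i
  define h where "h i = (if i < n1 then h1 i else h2 (i - n1))" for i
  have sumeq: "(\<Sum>i<n1 + m. g i v * h i v) = (\<Sum>i<n1. g1 i v * h1 i v) + (\<Sum>i<m. g2 i v * h2 i v)" for m v
    by (induction m) (auto simp: g_def h_def)
  show ?thesis unfolding strength_le_def
    apply (rule exI[of _ g], rule exI[of _ h])
    using 1 2 sumeq[of _ n2, unfolded g_def h_def] by (auto simp: g_def h_def)
qed

lemma strength_le_sum:
  assumes "\<And>i. i < n \<Longrightarrow> strength_le s (qq i) m"
  shows "strength_le s (\<lambda>x. \<Sum>i<n. qq i x) (n * m)"
  using assms
proof (induction n)
  case 0 then show ?case using strength_le_0 by simp
next
  case (Suc n)
  have "strength_le s (\<lambda>x. (\<Sum>i<n. qq i x) + qq n x) (n * m + m)"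
    by (rule strength_le_add) (use Suc in auto)
  then show ?case by (simp add: add.commute)
qed

locale qform = vector_space s for s :: "'k::field \<Rightarrow> 'v::ab_group_add \<Rightarrow> 'v" (infixr "*s" 75) +
  fixes B :: "'v \<Rightarrow> 'v \<Rightarrow> 'k"
  assumes B_add: "B (x + y) z = B x z + B y z"
    and B_scale: "B (t *s x) y = t * B x y"
    and B_sym: "B x y = B y x"
begin

lemma B_add2: "B x (y + z) = B x y + B x z"
  by (metis B_add B_sym)
lemma B_scale2: "B x (t *s y) = t * B x y"
  by (metis B_scale B_sym)
lemma B_zero[simp]: "B 0 y = 0" "B x 0 = 0"
  using B_scale[of 0 0 y] B_scale2[of x 0 0] by auto
lemma B_neg[simp]: "B (- x) y = - B x y" "B x (- y) = - B x y"
  using B_add[of x "-x" y] B_add2[of x y "-y"] by (auto simp: eq_neg_iff_add_eq_0 add.commute)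
lemma B_diff: "B (x - y) z = B x z - B y z" "B x (y - z) = B x y - B x z"
  using B_add[of x "-y" z] B_add2[of x y "-z"] by auto
lemma B_sum: "B (\<Sum>i\<in>I. f i) y = (\<Sum>i\<in>I. B (f i) y)"
  by (induction I rule: infinite_finite_induct) (auto simp: B_add)
lemma B_sum2: "B y (\<Sum>i\<in>I. f i) = (\<Sum>i\<in>I. B y (f i))"
  by (induction I rule: infinite_finite_induct) (auto simp: B_add2)

lemmas B_simps = B_add B_add2 B_scale B_scale2 B_diff B_sum B_sum2

lemma vs: "vector_space (*s)" by unfold_locales

lemma lf_B: "linear_form (*s) (\<lambda>x. B x y)"
  by (rule linear_formI[OF vs]) (auto simp: B_simps)

end




context qform begin

lemma Q_add: "B (x + y) (x + y) = B x x + 2 * B x y + B y y"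
  by (simp add: B_add B_add2 B_sym[of y x])

lemma step:
  fixes n :: nat and e f :: "nat \<Rightarrow> 'v"
  assumes sq: "\<And>d::'k. \<exists>r. r * r = d" and two: "(2::'k) \<noteq> 0"
    and nd: "\<And>m. \<not> strength_le (*s) (\<lambda>x. B x x) m"
    and hyp: "\<And>i j. i < n \<Longrightarrow> j < n \<Longrightarrow> B (e i) (e j) = 0 \<and> B (f i) (f j) = 0 \<and> B (e i) (f j) = (if i = j then 1 else 0)"
  shows "\<exists>a b. B a a = 0 \<and> B b b = 0 \<and> B a b = 1 \<and>
     (\<forall>i<n. B a (e i) = 0 \<and> B a (f i) = 0 \<and> B b (e i) = 0 \<and> B b (f i) = 0)"
proof -
  have hfe: "B (f i) (e j) = (if i = j then 1 else 0)" if "i < n" "j < n" for i j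
    using hyp[OF that(2,1)] B_sym[of "f i" "e j"] by auto
  have hee: "B (e i) (e j) = 0" "B (f i) (f j) = 0" "B (e i) (f j) = (if i = j then 1 else 0)"
    if "i < n" "j < n" for i j using hyp[OF that] by auto
  define K where "K = {x. \<forall>i<n. B x (e i) = 0 \<and> B x (f i) = 0}"
  define h where "h x = (\<Sum>i<n. B x (f i) *s e i + B x (e i) *s f i)" for x
  define p where "p x = x - h x" for x
  have Bhe: "B (h x) (e j) = B x (e j)" if "j < n" for x j
  proof -
    have md: "\<And>(a::'k) P. a * (if P then 1 else 0) = (if P then a else 0)" by simp
    show ?thesis
      unfolding h_def using that by (simp add: B_simps hee hfe md)
  qed
  have Bhf: "B (h x) (f j) = B x (f j)" if "j < n" for x j
  proof -
    have md: "\<And>(a::'k) P. a * (if P then 1 else 0) = (if P then a else 0)" by simp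
    show ?thesis
      unfolding h_def using that by (simp add: B_simps hee hfe md)
  qed
  have pK: "p x \<in> K" for x
    by (auto simp: K_def p_def B_diff Bhe Bhf)
  have hadd: "h (x + y) = h x + h y" for x y
    by (simp add: h_def B_simps scale_left_distrib sum.distrib algebra_simps)
  have hscale: "h (t *s x) = t *s h x" for t x
    by (simp add: h_def B_simps scale_sum_right scale_right_distrib)
  have padd: "p (x + y) = p x + p y" for x y
    by (simp add: p_def hadd)
  have pscale: "p (t *s x) = t *s p x" for t x
    by (simp add: p_def hscale scale_right_diff_distrib)
  have Kh: "B x (h y) = 0" if "x \<in> K" for x y
    using that by (simp add: K_def h_def B_simps)
  have decomp: "B x x = B (p x) (p x) + (\<Sum>i<n. B x (f i) * B (e i) (h x) + B x (e i) * B (f i) (h x))" for x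
  proof -
    have "x = p x + h x" by (simp add: p_def)
    then have "B x x = B (p x) (p x) + 2 * B (p x) (h x) + B (h x) (h x)"
      by (metis Q_add)
    also have "B (p x) (h x) = 0" using Kh pK by blast
    also have "B (h x) y = (\<Sum>i<n. B x (f i) * B (e i) y + B x (e i) * B (f i) y)" for y
      by (simp add: h_def[of x] B_add B_scale B_sum)
    finally show ?thesis by simp
  qed
  have lf_eh: "linear_form (*s) (\<lambda>x. B u (h x))" for u
    by (rule linear_formI[OF vs]) (auto simp: hadd hscale B_simps)
  have strR: "strength_le (*s) (\<lambda>x. \<Sum>i<n. B x (f i) * B (e i) (h x) + B x (e i) * B (f i) (h x)) (n * (1 + 1))"
    by (rule strength_le_sum, rule strength_le_add; rule strength_le_prod; rule lf_B lf_eh)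
  show ?thesis
  proof (cases "\<exists>a\<in>K. \<exists>b\<in>K. B a a = 0 \<and> B a b \<noteq> 0")
    case True
    then obtain a b where ab: "a \<in> K" "b \<in> K" "B a a = 0" "B a b \<noteq> 0" by blast
    define b1 where "b1 = (1 / B a b) *s b"
    define b2 where "b2 = b1 + (- B b1 b1 / 2) *s a"
    have ab1: "B a b1 = 1" using ab by (simp add: b1_def B_simps)
    have "B b2 b2 = B b1 b1 + 2 * (- B b1 b1 / 2) * B b1 a"
      unfolding b2_def Q_add by (simp add: B_simps ab)
    also have "B b1 a = 1" using ab1 B_sym by metis
    finally have "B b2 b2 = 0" using two by simp
    moreover have "B a b2 = 1" using ab ab1 by (simp add: b2_def B_simps)
    moreover have "b2 \<in> K" using ab by (auto simp: K_def b2_def b1_def B_simps)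
    ultimately show ?thesis using ab by (intro exI[of _ a] exI[of _ b2]) (auto simp: K_def)
  next
    case notgood: False
    show ?thesis
    proof (cases "\<forall>x\<in>K. B x x = 0")
      case True
      then have "B x x = (\<Sum>i<n. B x (f i) * B (e i) (h x) + B x (e i) * B (f i) (h x))" for x
        using decomp[of x] pK[of x] by simp
      then have "(\<lambda>x. B x x) = (\<lambda>x. \<Sum>i<n. B x (f i) * B (e i) (h x) + B x (e i) * B (f i) (h x))"
        by auto
      with strR nd show ?thesis by metis
    next
      case False
      then obtain c where c: "c \<in> K" "B c c \<noteq> 0" by blast
      have Kform: "B x x = B x c * B x c / B c c" if x: "x \<in> K" for x
      proof -
        define \<beta> where "\<beta> = B x c"
        define \<gamma> where "\<gamma> = B c c"
        obtain r where r: "r * r = \<beta> * \<beta> - \<gamma> * B x x" using sq by blast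
        define t where "t = (\<beta> + r) / \<gamma>"
        define a where "a = x - t *s c"
        have g0: "\<gamma> \<noteq> 0" using c by (simp add: \<gamma>_def)
        have tg: "t * \<gamma> = \<beta> + r" using g0 by (simp add: t_def)
        have aK: "a \<in> K" using x c by (auto simp: K_def a_def B_simps)
        have Baa: "B a a = B x x - 2 * t * \<beta> + t * t * \<gamma>"
          by (simp add: a_def B_simps \<beta>_def \<gamma>_def B_sym[of c x] algebra_simps)
        have "B a a * \<gamma> = B x x * \<gamma> - 2 * (t * \<gamma>) * \<beta> + (t * \<gamma>) * (t * \<gamma>)"
          unfolding Baa by (simp add: algebra_simps)
        also have "\<dots> = B x x * \<gamma> - 2 * (\<beta> + r) * \<beta> + (\<beta> + r) * (\<beta> + r)"
          by (simp add: tg)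
        also have "\<dots> = B x x * \<gamma> - \<beta> * \<beta> + r * r" by (simp add: algebra_simps)
        also have "\<dots> = 0" by (simp add: r algebra_simps)
        finally have Baa0: "B a a = 0" using g0 by simp
        then have "B a c = 0" using notgood aK c(1) by blast
        then have "\<beta> = t * \<gamma>" by (simp add: a_def B_simps \<beta>_def \<gamma>_def)
        then have "B x x = t * \<beta>" using Baa Baa0 by (simp add: algebra_simps)
        then show ?thesis using \<open>\<beta> = t * \<gamma>\<close> g0 by (simp add: \<beta>_def \<gamma>_def field_simps)
      qed
      have lf1: "linear_form (*s) (\<lambda>x. B (p x) c)"
        by (rule linear_formI[OF vs]) (auto simp: padd pscale B_simps)
      have lf2: "linear_form (*s) (\<lambda>x. B (p x) c / B c c)"
        by (rule linear_formI[OF vs]) (auto simp: padd pscale B_simps add_divide_distrib)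
      have eqx: "B x x = B (p x) c / B c c * B (p x) c + (\<Sum>i<n. B x (f i) * B (e i) (h x) + B x (e i) * B (f i) (h x))" for x
        using decomp[of x] Kform[OF pK[of x]] by simp
      have eq: "(\<lambda>x. B x x) = (\<lambda>x. B (p x) c / B c c * B (p x) c + (\<Sum>i<n. B x (f i) * B (e i) (h x) + B x (e i) * B (f i) (h x)))"
        by (rule ext) (rule eqx)
      have "strength_le (*s) (\<lambda>x. B x x) (1 + n * (1 + 1))"
        unfolding eq by (rule strength_le_add[OF strength_le_prod[OF lf2 lf1] strR])
      with nd show ?thesis by blast
    qed
  qed
qed

end



context qform begin

lemma hyp_seq:
  assumes sq: "\<And>d::'k. \<exists>r. r * r = d" and two: "(2::'k) \<noteq> 0"
    and nd: "\<And>m. \<not> strength_le (*s) (\<lambda>x. B x x) m"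
  shows "\<exists>E F :: nat \<Rightarrow> 'v. \<forall>i j. B (E i) (E j) = 0 \<and> B (F i) (F j) = 0 \<and> B (E i) (F j) = (if i = j then 1 else 0)"
proof -
  define P where "P n ef \<longleftrightarrow> (\<forall>i<n. \<forall>j<n. B (fst ef i) (fst ef j) = 0 \<and> B (snd ef i) (snd ef j) = 0 \<and>
      B (fst ef i) (snd ef j) = (if i = j then 1 else 0))" for n and ef :: "(nat \<Rightarrow> 'v) \<times> (nat \<Rightarrow> 'v)"
  define R where "R n ef ef' \<longleftrightarrow> (\<forall>i<n. fst ef' i = fst ef i \<and> snd ef' i = snd ef i)"
    for n and ef ef' :: "(nat \<Rightarrow> 'v) \<times> (nat \<Rightarrow> 'v)"
  have "\<exists>G. \<forall>n. P n (G n) \<and> R n (G n) (G (Suc n))"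
  proof (rule dependent_nat_choice)
    show "\<exists>x. P 0 x" by (auto simp: P_def)
  next
    fix x n assume Px: "P n x"
    obtain e f where x: "x = (e, f)" by (cases x)
    have hyp: "\<And>i j. i < n \<Longrightarrow> j < n \<Longrightarrow> B (e i) (e j) = 0 \<and> B (f i) (f j) = 0 \<and> B (e i) (f j) = (if i = j then 1 else 0)"
      using Px by (auto simp: P_def x)
    obtain a b where ab: "B a a = 0" "B b b = 0" "B a b = 1"
      "\<forall>i<n. B a (e i) = 0 \<and> B a (f i) = 0 \<and> B b (e i) = 0 \<and> B b (f i) = 0"
      using step[OF sq two nd hyp] by blast
    have ab': "B (e i) a = 0" "B (f i) a = 0" "B (e i) b = 0" "B (f i) b = 0" "B b a = 1" if "i < n" for i
      using ab that B_sym by metis+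
    have hfe: "B (f i) (e j) = (if i = j then 1 else 0)" if "i < n" "j < n" for i j
      using hyp[OF that(2,1)] B_sym[of "f i" "e j"] by auto
    define y where "y = (e(n := a), f(n := b))"
    have "P (Suc n) y"
      unfolding P_def y_def
    proof (intro allI impI)
      fix i j assume i: "i < Suc n" and j: "j < Suc n"
      show "B (fst (e(n := a), f(n := b)) i) (fst (e(n := a), f(n := b)) j) = 0 \<and>
        B (snd (e(n := a), f(n := b)) i) (snd (e(n := a), f(n := b)) j) = 0 \<and>
        B (fst (e(n := a), f(n := b)) i) (snd (e(n := a), f(n := b)) j) = (if i = j then 1 else 0)"
        using i j hyp[of i j] ab ab'[of i] ab'[of j] unfolding less_Suc_eq by auto
    qed
    moreover have "R n x y" by (auto simp: R_def x y_def)
    ultimately show "\<exists>y. P (Suc n) y \<and> R n x y" by blast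
  qed
  then obtain G where G: "\<And>n. P n (G n)" "\<And>n. R n (G n) (G (Suc n))" by blast
  have agree: "fst (G m) i = fst (G n) i \<and> snd (G m) i = snd (G n) i" if "i < n" "n \<le> m" for i n m
    using that(2)
  proof (induction m rule: dec_induct)
    case base then show ?case by simp
  next
    case (step m)
    then show ?case using G(2)[of m] that(1) by (auto simp: R_def)
  qed
  define E where "E i = fst (G (Suc i)) i" for i
  define F where "F i = snd (G (Suc i)) i" for i
  have "B (E i) (E j) = 0 \<and> B (F i) (F j) = 0 \<and> B (E i) (F j) = (if i = j then 1 else 0)" for i j
  proof -
    define N where "N = Suc (max i j)"
    have "E i = fst (G N) i" "F i = snd (G N) i" "E j = fst (G N) j" "F j = snd (G N) j"
      using agree[of i "Suc i" N] agree[of j "Suc j" N] by (auto simp: E_def F_def N_def)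
    moreover have "i < N" "j < N" by (auto simp: N_def)
    ultimately show ?thesis using G(1)[of N] unfolding P_def by auto
  qed
  note * = this
  show ?thesis by (intro exI[of _ E] exI[of _ F]) (use * in blast)
qed

end



lemma P2_qform:
  fixes s :: "'k::field \<Rightarrow> 'v::ab_group_add \<Rightarrow> 'v"
  assumes vs: "vector_space s" and bas: "is_basis s BB"
    and q: "\<And>v. q v = (\<Sum>(b1, b2) \<in> {b. module.representation s BB v b \<noteq> 0} \<times>
                                  {b. module.representation s BB v b \<noteq> 0}.
            c b1 b2 * module.representation s BB v b1 * module.representation s BB v b2)"
    and two: "(2::'k) \<noteq> 0"
  shows "\<exists>B. qform s B \<and> (\<forall>x. q x = B x x) \<and> (\<forall>b1\<in>BB. \<forall>b2\<in>BB. B b1 b2 = (c b1 b2 + c b2 b1) / 2)"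
proof -
  interpret vector_space s by fact
  have ind: "independent BB" and sp: "span BB = UNIV" using bas by (auto simp: is_basis_def)
  define R where "R = representation BB"
  have Radd: "R (x + y) b = R x b + R y b" for x y b
    using representation_add[OF ind] sp by (simp add: R_def)
  have Rscale: "R (s t x) b = t * R x b" for t x b
    using representation_scale[OF ind] sp by (simp add: R_def)
  define supp where "supp x = {b. R x b \<noteq> 0}" for x
  have fs: "finite (supp x)" for x by (simp add: supp_def R_def finite_representation)
  define Bc where "Bc T x y = (\<Sum>(b1, b2) \<in> T \<times> T. c b1 b2 * R x b1 * R y b2)" for T x y
  define Bc0 where "Bc0 x y = Bc (supp x \<union> supp y) x y" for x y
  have Bc_ext: "Bc T x y = Bc0 x y" if "finite T" "supp x \<union> supp y \<subseteq> T" for T x y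
    unfolding Bc0_def Bc_def
    by (rule sum.mono_neutral_left[symmetric]) (use that fs in \<open>auto simp: supp_def\<close>)
  have Bc_add: "Bc T (x + y) z = Bc T x z + Bc T y z" for T x y z
    by (simp add: Bc_def Radd algebra_simps sum.distrib case_prod_beta)
  have Bc_add2: "Bc T z (x + y) = Bc T z x + Bc T z y" for T x y z
    by (simp add: Bc_def Radd algebra_simps sum.distrib case_prod_beta)
  have Bc_scale: "Bc T (s t x) y = t * Bc T x y" for T t x y
    by (simp add: Bc_def Rscale algebra_simps sum_distrib_left case_prod_beta)
  have Bc_scale2: "Bc T y (s t x) = t * Bc T y x" for T t x y
    by (simp add: Bc_def Rscale algebra_simps sum_distrib_left case_prod_beta)
  have supp_add: "supp (x + y) \<subseteq> supp x \<union> supp y" for x y by (auto simp: supp_def Radd)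
  have supp_scale: "supp (s t x) \<subseteq> supp x" for t x by (auto simp: supp_def Rscale)
  have Bc0_add: "Bc0 (x + y) z = Bc0 x z + Bc0 y z" for x y z
  proof -
    let ?T = "supp x \<union> supp y \<union> supp z"
    have "Bc0 (x + y) z = Bc ?T (x + y) z"
      by (rule Bc_ext[symmetric]) (use fs supp_add in auto)
    also have "\<dots> = Bc ?T x z + Bc ?T y z" by (rule Bc_add)
    also have "\<dots> = Bc0 x z + Bc0 y z"
      by (subst (1 2) Bc_ext) (use fs in auto)
    finally show ?thesis .
  qed
  have Bc0_add2: "Bc0 z (x + y) = Bc0 z x + Bc0 z y" for x y z
  proof -
    let ?T = "supp x \<union> supp y \<union> supp z"
    have "Bc0 z (x + y) = Bc ?T z (x + y)"
      by (rule Bc_ext[symmetric]) (use fs supp_add in auto)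
    also have "\<dots> = Bc ?T z x + Bc ?T z y" by (rule Bc_add2)
    also have "\<dots> = Bc0 z x + Bc0 z y"
      by (subst (1 2) Bc_ext) (use fs in auto)
    finally show ?thesis .
  qed
  have Bc0_scale: "Bc0 (s t x) y = t * Bc0 x y" for t x y
  proof -
    let ?T = "supp x \<union> supp y"
    have "Bc0 (s t x) y = Bc ?T (s t x) y"
      by (rule Bc_ext[symmetric]) (use fs supp_scale in auto)
    also have "\<dots> = t * Bc ?T x y" by (rule Bc_scale)
    also have "\<dots> = t * Bc0 x y"
      by (subst Bc_ext) (use fs in auto)
    finally show ?thesis .
  qed
  have Bc0_scale2: "Bc0 y (s t x) = t * Bc0 y x" for t x y
  proof -
    let ?T = "supp x \<union> supp y"
    have "Bc0 y (s t x) = Bc ?T y (s t x)"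
      by (rule Bc_ext[symmetric]) (use fs supp_scale in auto)
    also have "\<dots> = t * Bc ?T y x" by (rule Bc_scale2)
    also have "\<dots> = t * Bc0 y x"
      by (subst Bc_ext) (use fs in auto)
    finally show ?thesis .
  qed
  define Bq where "Bq x y = (Bc0 x y + Bc0 y x) / 2" for x y
  have "qform s Bq"
  proof
    show "Bq (x + y) z = Bq x z + Bq y z" for x y z
      by (simp add: Bq_def Bc0_add Bc0_add2 add_divide_distrib)
    show "Bq (s t x) y = t * Bq x y" for t x y
      by (simp add: Bq_def Bc0_scale Bc0_scale2 algebra_simps)
    show "Bq x y = Bq y x" for x y
      by (simp add: Bq_def add.commute)
  qed
  moreover have "q x = Bq x x" for x
  proof -
    have "q x = Bc0 x x" unfolding q Bc0_def Bc_def supp_def R_def by simp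
    then show ?thesis using two by (simp add: Bq_def)
  qed
  moreover have "Bq b1 b2 = (c b1 b2 + c b2 b1) / 2" if b: "b1 \<in> BB" "b2 \<in> BB" for b1 b2
  proof -
    have Rb: "R b = (\<lambda>v. if v = b then 1 else 0)" if "b \<in> BB" for b
      unfolding R_def by (rule representation_basis[OF ind that])
    have Bcb: "Bc0 b1 b2 = c b1 b2" if b: "b1 \<in> BB" "b2 \<in> BB" for b1 b2
    proof -
      have "Bc0 b1 b2 = Bc {b1, b2} b1 b2"
        by (rule Bc_ext[symmetric]) (auto simp: supp_def Rb b)
      also have "\<dots> = (\<Sum>p\<in>{b1, b2} \<times> {b1, b2}. if (b1, b2) = p then c b1 b2 else 0)"
        unfolding Bc_def by (rule sum.cong) (auto simp: Rb b split: if_splits)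
      also have "\<dots> = c b1 b2" by (subst sum.delta') auto
      finally show ?thesis .
    qed
    show ?thesis using b by (simp add: Bq_def Bcb)
  qed
  ultimately show ?thesis by blast
qed




lemma countable_basis:
  fixes s :: "'k::field \<Rightarrow> 'w::ab_group_add \<Rightarrow> 'w"
  assumes vs: "vector_space s" and bas: "is_basis s BB" and cd: "countable_dim s"
  shows "countable BB"
proof -
  interpret vector_space s by fact
  obtain B' where B': "is_basis s B'" "countable B'" using cd by (auto simp: countable_dim_def)
  have ind: "independent BB" and sp: "span BB = UNIV" using bas by (auto simp: is_basis_def)
  have sp': "span B' = UNIV" using B' by (auto simp: is_basis_def)
  define C where "C = (\<Union>b'\<in>B'. {b. representation BB b' b \<noteq> 0})"
  have cC: "countable C" unfolding C_def
    by (rule countable_UN[OF B'(2)]) (auto intro: countable_finite simp: finite_representation)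
  have CB: "C \<subseteq> BB" by (auto simp: C_def dest: representation_ne_zero)
  have "B' \<subseteq> span C"
  proof
    fix b' assume "b' \<in> B'"
    have "b' = (\<Sum>b | representation BB b' b \<noteq> 0. s (representation BB b' b) b)"
      using sum_nonzero_representation_eq[OF ind] sp by simp
    also have "\<dots> \<in> span C"
      by (intro span_sum span_scale span_base) (use \<open>b' \<in> B'\<close> in \<open>auto simp: C_def\<close>)
    finally show "b' \<in> span C" .
  qed
  then have "span B' \<subseteq> span C" by (metis span_minimal subspace_span)
  then have "BB \<subseteq> span C" using sp' by auto
  then have "BB = C" using spanning_subset_independent[OF CB ind] by simp
  then show ?thesis using cC by simp
qed

lemma embed_into:
  fixes sV :: "'k::alg_closed_field \<Rightarrow> 'v::ab_group_add \<Rightarrow> 'v"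
    and sW :: "'k \<Rightarrow> 'w::ab_group_add \<Rightarrow> 'w"
  assumes two: "(2::'k) \<noteq> 0"
    and V: "quadratic_space sV qV" "nondegenerate sV qV"
    and W: "quadratic_space sW qW" "countable_dim sW"
  shows "embeds sW qW sV qV"
proof -
  have vsV: "vector_space sV" and vsW: "vector_space sW"
    using V W by (auto simp: quadratic_space_def)
  obtain BV cV where BV: "is_basis sV BV" "\<And>v. qV v = (\<Sum>(b1, b2) \<in> {b. module.representation sV BV v b \<noteq> 0} \<times>
                                  {b. module.representation sV BV v b \<noteq> 0}.
            cV b1 b2 * module.representation sV BV v b1 * module.representation sV BV v b2)"
    using V by (auto simp: quadratic_space_def P2_def)
  obtain B where B: "qform sV B" "\<And>x. qV x = B x x"
    using P2_qform[OF vsV BV two] by blast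
  interpret qform sV B by fact
  have qVB: "qV = (\<lambda>x. B x x)" using B(2) by auto
  have sq: "\<exists>r. r * r = d" for d :: 'k
    using nth_root_exists[of 2 d] by (auto simp: power2_eq_square)
  have nd: "\<not> strength_le sV (\<lambda>x. B x x) m" for m
    using V(2) by (auto simp: nondegenerate_def strength_def qVB split: if_splits)
  obtain E F :: "nat \<Rightarrow> 'v" where EF: "\<And>i j. B (E i) (E j) = 0" "\<And>i j. B (F i) (F j) = 0"
     "\<And>i j. B (E i) (F j) = (if i = j then 1 else 0)"
    using hyp_seq[OF sq two nd] by blast
  have FE: "B (F i) (E j) = (if j = i then 1 else 0)" for i j
    using EF(3)[of j i] B_sym by metis
  obtain BW c where BW: "is_basis sW BW" "\<And>v. qW v = (\<Sum>(b1, b2) \<in> {b. module.representation sW BW v b \<noteq> 0} \<times>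
                                  {b. module.representation sW BW v b \<noteq> 0}.
            c b1 b2 * module.representation sW BW v b1 * module.representation sW BW v b2)"
    using W by (auto simp: quadratic_space_def P2_def)
  have "countable BW" by (rule countable_basis[OF vsW BW(1) W(2)])
  then obtain idx :: "'w \<Rightarrow> nat" where idx: "inj_on idx BW" by (auto simp: countable_def)
  define T where "T b = idx -` {..idx b} \<inter> BW" for b
  have fT: "finite (T b)" for b unfolding T_def by (rule finite_vimage_IntI[OF _ idx]) auto
  have T_iff: "a \<in> T b \<longleftrightarrow> a \<in> BW \<and> idx a \<le> idx b" for a b by (auto simp: T_def)
  define hh where "hh b' b = (if b' = b then c b b / 2 else (c b' b + c b b') / 2)" for b' b
  define \<phi>0 where "\<phi>0 b = E (idx b) + (\<Sum>b'\<in>T b. sV (hh b' b) (F (idx b')))" for b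
  have sel: "(\<Sum>b'\<in>T b. g b' * (if idx a = idx b' then 1 else 0)) = (if idx a \<le> idx b then g a else 0)"
    if "a \<in> BW" "b \<in> BW" for a b and g :: "'w \<Rightarrow> 'k"
  proof -
    have "(\<Sum>b'\<in>T b. g b' * (if idx a = idx b' then 1 else 0)) = (\<Sum>b'\<in>T b. if a = b' then g a else 0)"
      by (rule sum.cong) (use that idx in \<open>auto simp: T_iff dest: inj_onD\<close>)
    also have "\<dots> = (if idx a \<le> idx b then g a else 0)"
      using fT[of b] that by (simp add: T_iff)
    finally show ?thesis .
  qed
  have key: "B (\<phi>0 b1) (\<phi>0 b2) = (c b1 b2 + c b2 b1) / 2" if b: "b1 \<in> BW" "b2 \<in> BW" for b1 b2
  proof -
    have "B (\<phi>0 b1) (\<phi>0 b2) = (\<Sum>b'\<in>T b2. hh b' b2 * (if idx b1 = idx b' then 1 else 0))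
        + (\<Sum>b'\<in>T b1. hh b' b1 * (if idx b2 = idx b' then 1 else 0))"
      by (simp add: \<phi>0_def B_simps EF FE)
    also have "\<dots> = (if idx b1 \<le> idx b2 then hh b1 b2 else 0) + (if idx b2 \<le> idx b1 then hh b2 b1 else 0)"
      using b by (simp add: sel)
    also have "\<dots> = (c b1 b2 + c b2 b1) / 2"
    proof (cases "b1 = b2")
      case True then show ?thesis by (simp add: hh_def add_divide_distrib)
    next
      case False
      then have "idx b1 \<noteq> idx b2" using idx b by (auto dest: inj_onD)
      then show ?thesis using False by (auto simp: hh_def add.commute)
    qed
    finally show ?thesis .
  qed
  interpret pair: vector_space_pair sW sV using vsW vsV by (simp add: vector_space_pair_def)
  have indW: "module.independent sW BW" and spW: "module.span sW BW = UNIV"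
    using BW(1) by (auto simp: is_basis_def)
  define \<phi> where "\<phi> = pair.construct BW \<phi>0"
  have lin: "Vector_Spaces.linear sW sV \<phi>" unfolding \<phi>_def by (rule pair.linear_construct[OF indW])
  have \<phi>b: "\<phi> b = \<phi>0 b" if "b \<in> BW" for b unfolding \<phi>_def by (rule pair.construct_basis[OF indW that])
  interpret L: Vector_Spaces.linear sW sV \<phi> by (fact lin)
  have "qV (\<phi> w) = qW w" for w
  proof -
    define R where "R = module.representation sW BW w"
    define S where "S = {b. R b \<noteq> 0}"
    have fS: "finite S" and SB: "S \<subseteq> BW"
      using pair.vs1.finite_representation pair.vs1.representation_ne_zero
      by (auto simp: S_def R_def)
    have w: "w = (\<Sum>b\<in>S. sW (R b) b)"
      using pair.vs1.sum_nonzero_representation_eq[OF indW, of w] spW by (simp add: S_def R_def)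
    have "\<phi> w = (\<Sum>b\<in>S. sV (R b) (\<phi>0 b))"
      using SB by (subst w) (auto simp: L.sum L.scale \<phi>b intro!: sum.cong)
    then have "qV (\<phi> w) = (\<Sum>b2\<in>S. \<Sum>b1\<in>S. R b2 * (R b1 * B (\<phi>0 b1) (\<phi>0 b2)))"
      by (simp add: B(2) B_sum B_sum2 B_scale B_scale2 sum_distrib_left)
    also have "\<dots> = (\<Sum>b2\<in>S. \<Sum>b1\<in>S. R b2 * (R b1 * ((c b1 b2 + c b2 b1) / 2)))"
      using SB by (intro sum.cong refl) (simp add: key subset_iff)
    also have "\<dots> = ((\<Sum>b1\<in>S. \<Sum>b2\<in>S. c b1 b2 * R b1 * R b2) + (\<Sum>b1\<in>S. \<Sum>b2\<in>S. c b2 b1 * R b1 * R b2)) / 2"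
      by (simp add: sum_divide_distrib sum.distrib[symmetric] algebra_simps add_divide_distrib)
    also have "(\<Sum>b1\<in>S. \<Sum>b2\<in>S. c b2 b1 * R b1 * R b2) = (\<Sum>b1\<in>S. \<Sum>b2\<in>S. c b1 b2 * R b1 * R b2)"
      by (subst sum.swap) (simp add: algebra_simps)
    also have "(\<Sum>b1\<in>S. \<Sum>b2\<in>S. c b1 b2 * R b1 * R b2) = qW w"
      by (simp add: BW(2) S_def R_def sum.cartesian_product)
    finally show ?thesis using two by simp
  qed
  then show ?thesis unfolding embeds_def using lin by (intro exI[of _ \<phi>]) auto
qed




lemma vs_poly: "vector_space (smult :: 'k::field \<Rightarrow> 'k poly \<Rightarrow> 'k poly)"
  by unfold_locales (auto simp: smult_add_right smult_add_left)

lemma lf_zero: "linear_form s g \<Longrightarrow> g 0 = 0"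
proof -
  assume a: "linear_form s g"
  have "g (0 + 0) = g 0 + g 0" by (rule linear_formD(1)[OF a])
  then have "g 0 + g 0 = g 0 + 0" by simp
  then show "g 0 = 0" by (rule add_left_imp_eq)
qed

lemma lf_sum: "linear_form s g \<Longrightarrow> g (\<Sum>i\<in>I. f i) = (\<Sum>i\<in>I. g (f i))"
proof (induction I rule: infinite_finite_induct)
  case (infinite A)
  then show ?case using lf_zero by simp
next
  case empty
  then show ?case using lf_zero by simp
next
  case (insert x F) then show ?case by (simp add: linear_formD(1))
qed

lemma basis_poly: "is_basis (smult :: 'k::field \<Rightarrow> 'k poly \<Rightarrow> 'k poly) (range (\<lambda>i. monom 1 i))"
proof -
  interpret vector_space "smult :: 'k \<Rightarrow> 'k poly \<Rightarrow> 'k poly" by (rule vs_poly)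
  let ?BB = "range (\<lambda>i. monom (1::'k) i)"
  have ind: "independent ?BB"
    unfolding independent_explicit_finite_subsets
  proof (intro allI impI ballI)
    fix T u v assume T: "T \<subseteq> ?BB" "finite T" "(\<Sum>v\<in>T. smult (u v) v) = 0" and v: "v \<in> T"
    then obtain k where k: "v = monom 1 k" by auto
    have "0 = coeff (\<Sum>v\<in>T. smult (u v) v) k" using T by simp
    also have "\<dots> = (\<Sum>w\<in>T. if w = v then u v else 0)"
      unfolding coeff_sum
    proof (rule sum.cong)
      fix w assume "w \<in> T"
      then obtain j where "w = monom 1 j" using T by auto
      then show "coeff (smult (u w) w) k = (if w = v then u v else 0)"
        by (auto simp: k coeff_monom monom_eq_iff')
    qed simp
    also have "\<dots> = u v" using T v by simp
    finally show "u v = 0" by simp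
  qed
  have "p \<in> span ?BB" for p :: "'k poly"
  proof -
    have "p = (\<Sum>i\<le>degree p. smult (coeff p i) (monom 1 i))"
      by (simp add: smult_monom poly_as_sum_of_monoms)
    also have "\<dots> \<in> span ?BB" by (intro span_sum span_scale span_base) auto
    finally show ?thesis .
  qed
  then show ?thesis using ind by (auto simp: is_basis_def)
qed




definition cP :: "'k::field poly \<Rightarrow> 'k poly \<Rightarrow> 'k" where
  "cP b1 b2 = (if \<exists>i. b1 = monom 1 (2*i) \<and> b2 = monom 1 (2*i+1) then 1 else 0)"

definition qP :: "'k::field poly \<Rightarrow> 'k" where
  "qP v = (\<Sum>(b1, b2) \<in> {b. module.representation smult (range (\<lambda>i. monom 1 i)) v b \<noteq> 0} \<times>
                          {b. module.representation smult (range (\<lambda>i. monom 1 i)) v b \<noteq> 0}.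
            cP b1 b2 * module.representation smult (range (\<lambda>i. monom 1 i)) v b1
                     * module.representation smult (range (\<lambda>i. monom 1 i)) v b2)"

lemma cP_monom: "cP (monom 1 a) (monom (1::'k::field) b) = (if even a \<and> b = a + 1 then 1 else 0)"
  by (auto simp: cP_def monom_eq_iff')

lemma qP_quadratic: "quadratic_space smult (qP :: 'k::field poly \<Rightarrow> 'k)"
  unfolding quadratic_space_def P2_def using vs_poly basis_poly
  by (intro conjI exI[of _ "range (\<lambda>i. monom 1 i)"] exI[of _ cP]) (auto simp: qP_def)

lemma countable_dim_poly: "countable_dim (smult :: 'k::field \<Rightarrow> 'k poly \<Rightarrow> 'k poly)"
  unfolding countable_dim_def using basis_poly by blast

lemma qP_nondeg:
  assumes two: "(2::'k::field) \<noteq> 0"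
  shows "nondegenerate smult (qP :: 'k poly \<Rightarrow> 'k)"
proof -
  obtain B :: "'k poly \<Rightarrow> 'k poly \<Rightarrow> 'k" where B: "qform smult B" "\<And>x. qP x = B x x"
     "\<And>b1 b2. b1 \<in> range (\<lambda>i. monom 1 i) \<Longrightarrow> b2 \<in> range (\<lambda>i. monom 1 i) \<Longrightarrow> B b1 b2 = (cP b1 b2 + cP b2 b1) / 2"
    using P2_qform[OF vs_poly basis_poly qP_def two] by blast
  interpret qform smult B by fact
  have Bm: "B (monom 1 a) (monom 1 b) = (cP (monom 1 a) (monom 1 b) + cP (monom 1 b) (monom 1 a)) / 2" for a b
    by (rule B(3)) auto
  have Bee: "B (monom 1 (2*i)) (monom 1 (2*j)) = 0" for i j
  proof -
    have "2*j \<noteq> Suc (2*i)" "2*i \<noteq> Suc (2*j)" by presburger+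
    then show ?thesis unfolding Bm cP_monom by simp
  qed
  have Bef: "B (monom 1 (2*i)) (monom 1 (2*k+1)) = (if i = k then 1/2 else 0)" for i k
    unfolding Bm cP_monom by auto
  have Bff: "B (monom 1 (2*k+1)) (monom 1 (2*k+1)) = 0" for k
    unfolding Bm cP_monom by simp
  have "\<not> strength_le smult (qP :: 'k poly \<Rightarrow> 'k) n" for n
  proof
    assume "strength_le smult (qP :: 'k poly \<Rightarrow> 'k) n"
    then obtain g h :: "nat \<Rightarrow> 'k poly \<Rightarrow> 'k" where gh0: "\<forall>i<n. linear_form smult (g i) \<and> linear_form smult (h i)"
      "\<forall>v. qP v = (\<Sum>i<n. g i v * h i v)" unfolding strength_le_def by blast
    have gh: "\<And>i. i < n \<Longrightarrow> linear_form smult (g i) \<and> linear_form smult (h i)"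
      "\<And>v. qP v = (\<Sum>i<n. g i v * h i v)" using gh0 by auto
    define M where "M j i = (if j < n then g j (monom 1 (2*i)) else h (j - n) (monom 1 (2*i)))" for j i
    obtain a where a: "\<exists>k\<in>{..<2*n+1}. a k \<noteq> 0" "\<forall>j<2*n. (\<Sum>i\<in>{..<2*n+1}. M j i * a i) = 0"
      using cz[of "{..<2*n+1}" "2*n" M] by auto
    then obtain k where k: "k < 2*n+1" "a k \<noteq> 0" by auto
    define u where "u = (\<Sum>i\<in>{..<2*n+1}. smult (a i) (monom (1::'k) (2*i)))"
    have gu: "g j u = 0" if "j < n" for j
    proof -
      have lf: "linear_form smult (g j)" using gh(1)[OF that] by simp
      have "g j u = (\<Sum>i\<in>{..<2*n+1}. g j (smult (a i) (monom 1 (2*i))))"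
        unfolding u_def by (rule lf_sum[OF lf])
      also have "\<dots> = (\<Sum>i\<in>{..<2*n+1}. M (j) i * a i)"
        by (rule sum.cong) (simp_all add: linear_formD(2)[OF lf] M_def that mult.commute)
      also have "\<dots> = 0" using a(2) that by auto
      finally show ?thesis .
    qed
    have hu: "h j u = 0" if "j < n" for j
    proof -
      have lf: "linear_form smult (h j)" using gh(1)[OF that] by simp
      have "h j u = (\<Sum>i\<in>{..<2*n+1}. h j (smult (a i) (monom 1 (2*i))))"
        unfolding u_def by (rule lf_sum[OF lf])
      also have "\<dots> = (\<Sum>i\<in>{..<2*n+1}. M (n + j) i * a i)"
        by (rule sum.cong) (simp_all add: linear_formD(2)[OF lf] M_def that mult.commute)
      also have "\<dots> = 0" using a(2) that by auto
      finally show ?thesis .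
    qed
    define v where "v = monom (1::'k) (2*k+1)"
    have "qP (u + v) = qP v"
      unfolding gh(2)
    proof (rule sum.cong)
      fix x assume "x \<in> {..<n}"
      then have x: "x < n" by simp
      have "g x (u + v) = g x u + g x v" "h x (u + v) = h x u + h x v"
        using gh(1)[OF x] by (auto intro: linear_formD(1))
      then show "g x (u + v) * h x (u + v) = g x v * h x v" using gu[OF x] hu[OF x] by simp
    qed simp
    moreover have "qP (u + v) = B u u + 2 * B u v + B v v" by (simp add: B(2) Q_add)
    moreover have "B u u = 0" unfolding u_def B_sum B_sum2 B_scale B_scale2 Bee by simp
    moreover have "B u v = a k / 2"
    proof -
      have "B u v = (\<Sum>i\<in>{..<2*n+1}. if i = k then a k / 2 else 0)"
        unfolding u_def v_def B_sum B_scale Bef by (rule sum.cong) auto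
      also have "\<dots> = a k / 2" using k by (subst sum.delta) auto
      finally show ?thesis .
    qed
    moreover have "qP v = B v v" by (simp add: B(2))
    moreover have "B v v = 0" unfolding v_def by (rule Bff)
    ultimately have "a k = 0" using two by simp
    with k show False by simp
  qed
  then show ?thesis by (auto simp: nondegenerate_def strength_def)
qed



theorem corollary2p5:
  fixes sV :: "'k::alg_closed_field \<Rightarrow> 'v::ab_group_add \<Rightarrow> 'v"
    and sW :: "'k \<Rightarrow> 'w::ab_group_add \<Rightarrow> 'w"
  assumes "(2::'k) \<noteq> 0"
  shows "(\<exists>q :: 'k poly \<Rightarrow> 'k.
            quadratic_space smult q \<and> countable_dim (smult :: 'k \<Rightarrow> 'k poly \<Rightarrow> 'k poly)
            \<and> nondegenerate smult q)
       \<and> (\<forall>qV qW. quadratic_space sV qV \<and> countable_dim sV \<and> nondegenerate sV qV \<and>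
                  quadratic_space sW qW \<and> countable_dim sW \<and> nondegenerate sW qW
                  \<longrightarrow> isogenous sV qV sW qW)"
proof -
  have P1: "\<exists>q :: 'k poly \<Rightarrow> 'k.
            quadratic_space smult q \<and> countable_dim (smult :: 'k \<Rightarrow> 'k poly \<Rightarrow> 'k poly)
            \<and> nondegenerate smult q"
    using qP_quadratic countable_dim_poly qP_nondeg[OF assms] by blast
  have P2: "\<forall>qV qW. quadratic_space sV qV \<and> countable_dim sV \<and> nondegenerate sV qV \<and>
                  quadratic_space sW qW \<and> countable_dim sW \<and> nondegenerate sW qW
                  \<longrightarrow> isogenous sV qV sW qW"
    by (auto simp: isogenous_def intro: embed_into[OF assms])
  show ?thesis using P1 P2 by blast
qed

end
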